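(* Let $c\in\mathbb Z_{>0}$ and put $\nu_c=1$ if $c\ge2$, $\nu_c=2$ if $c=1$. Let $\alpha_1,\ldots,\alpha_m$ be words all of whose letters have integer first component, let $q\in\mathbb Z$, $z\in\mathbb C$, and $e_1,\ldots,e_m\in\mathbb Z_{\ge0}$. Then for every positive integer $k$, \[ \sum_{n=1}^{k}z^n(cn)^q\prod_{j=1}^{m}\mathcal H_{\alpha_j}(cn+1)^{e_j}\in\mathscr H_{ck}+\mathscr H_{ck+1}, \] and \[ \sum_{n=\nu_c}^{k}z^n(cn-1)^q\prod_{j=1}^{m}\mathcal H_{\alpha_j}(cn)^{e_j}\in\mathscr H_{ck-1}+\mathscr H_{ck}. \]
   Context: A letter is a pair $(r,s)\in\mathbb C^2$ and a word is a finite sequence of letters. For a word $\alpha=((r_1,s_1),\ldots,(r_d,s_d))$ and a positive integer $N$, \[ \mathcal H_{\alpha}(N)=\sum_{N\ge n_1>\cdots>n_d\ge1}\prod_{i=1}^{d}\frac{s_i^{n_i}}{n_i^{r_i}},\qquad \mathcal H_\emptyset(N)=1. \] For a positive integer $N$, $\mathscr H_N=\operatorname{span}_{\mathbb C}\{\mathcal H_\beta(N):\beta\text{ a word}\}$. *)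

theory Defs
  imports "HOL-Analysis.Analysis"
begin

type_synonym letter = "complex \<times> complex"
type_synonym word = "letter list"

definition idx_tuples :: "nat \<Rightarrow> nat \<Rightarrow> nat list set" where
  "idx_tuples N d = {ns. length ns = d \<and> sorted_wrt (>) ns \<and> (\<forall>n\<in>set ns. 1 \<le> n \<and> n \<le> N)}"

definition Hw :: "word \<Rightarrow> nat \<Rightarrow> complex" where
  "Hw \<alpha> N = (\<Sum>ns\<in>idx_tuples N (length \<alpha>).
      \<Prod>i<length \<alpha>. (snd (\<alpha>!i)) ^ (ns!i) / (of_nat (ns!i)) powr (fst (\<alpha>!i)))"

text \<open>F k lies in (span H_{N1 k}) + (span H_{N2 k}) uniformly in k >= 1: one fixed finite
  linear combination of words (coefficients independent of k) works for all k >= 1.\<close>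
definition in_HH_sum :: "(nat \<Rightarrow> complex) \<Rightarrow> (nat \<Rightarrow> nat) \<Rightarrow> (nat \<Rightarrow> nat) \<Rightarrow> bool" where
  "in_HH_sum F N1 N2 \<longleftrightarrow>
     (\<exists>P Q :: (complex \<times> word) list. \<forall>k\<ge>1.
        F k = (\<Sum>(a,\<beta>)\<leftarrow>P. a * Hw \<beta> (N1 k)) + (\<Sum>(a,\<beta>)\<leftarrow>Q. a * Hw \<beta> (N2 k)))"

definition nu :: "nat \<Rightarrow> nat" where
  "nu c = (if c \<ge> 2 then 1 else 2)"

end

theory Submission
  imports Defs
begin


lemma idx_zero: "idx_tuples N 0 = {[]}"
  by (auto simp: idx_tuples_def)

lemma idx_finite: "finite (idx_tuples N d)"
proof -
  have "idx_tuples N d \<subseteq> {xs. set xs \<subseteq> {1..N} \<and> length xs = d}"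
    by (auto simp: idx_tuples_def)
  moreover have "finite {xs. set xs \<subseteq> {1..N} \<and> length xs = d}"
    by (rule finite_lists_length_eq) simp
  ultimately show ?thesis by (rule finite_subset)
qed

lemma idx_Suc: "idx_tuples N (Suc d) = (\<Union>M\<in>{1..N}. (#) M ` idx_tuples (M-1) d)"
proof (rule set_eqI)
  fix xs
  show "xs \<in> idx_tuples N (Suc d) \<longleftrightarrow> xs \<in> (\<Union>M\<in>{1..N}. (#) M ` idx_tuples (M-1) d)"
  proof
    assume "xs \<in> idx_tuples N (Suc d)"
    then obtain M ns where xs: "xs = M # ns" and h: "length ns = d" "sorted_wrt (>) (M#ns)"
      "\<forall>n\<in>set (M#ns). 1 \<le> n \<and> n \<le> N"
      by (auto simp: idx_tuples_def length_Suc_conv)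
    then have "ns \<in> idx_tuples (M-1) d" by (auto simp: idx_tuples_def)
    then show "xs \<in> (\<Union>M\<in>{1..N}. (#) M ` idx_tuples (M-1) d)" using xs h by auto
  next
    assume "xs \<in> (\<Union>M\<in>{1..N}. (#) M ` idx_tuples (M-1) d)"
    then obtain M ns where "M \<in> {1..N}" "ns \<in> idx_tuples (M-1) d" "xs = M # ns" by auto
    then show "xs \<in> idx_tuples N (Suc d)" by (fastforce simp: idx_tuples_def)
  qed
qed

lemma Hw_Nil[simp]: "Hw [] N = 1"
  by (simp add: Hw_def idx_zero)

lemma Hw_Cons: "Hw ((r,s)#\<beta>) N = (\<Sum>M=1..N. s ^ M / of_nat M powr r * Hw \<beta> (M-1))"
proof -
  define f where "f = (\<lambda>ns. \<Prod>i<Suc (length \<beta>). (snd (((r,s)#\<beta>)!i)) ^ (ns!i) / (of_nat (ns!i)) powr (fst (((r,s)#\<beta>)!i)))"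
  have "Hw ((r,s)#\<beta>) N = sum f (\<Union>M\<in>{1..N}. (#) M ` idx_tuples (M-1) (length \<beta>))"
    by (simp add: Hw_def f_def idx_Suc)
  also have "\<dots> = (\<Sum>M=1..N. sum f ((#) M ` idx_tuples (M-1) (length \<beta>)))"
    by (rule sum.UNION_disjoint) (auto simp: idx_finite)
  also have "\<dots> = (\<Sum>M=1..N. sum (f \<circ> (#) M) (idx_tuples (M-1) (length \<beta>)))"
    by (intro sum.cong refl sum.reindex) (auto simp: inj_on_def)
  also have "\<dots> = (\<Sum>M=1..N. s ^ M / of_nat M powr r * Hw \<beta> (M-1))"
    by (intro sum.cong refl) (simp add: f_def Hw_def prod.lessThan_Suc_shift sum_distrib_left del: prod.lessThan_Suc)
  finally show ?thesis .
qed

lemma Hw_Cons_step: "M \<ge> 1 \<Longrightarrow> Hw ((r,s)#\<beta>) M = Hw ((r,s)#\<beta>) (M-1) + s ^ M / of_nat M powr r * Hw \<beta> (M-1)"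
  by (cases M) (auto simp: Hw_Cons)


definition intw :: "word \<Rightarrow> bool" where "intw \<beta> \<longleftrightarrow> (\<forall>l\<in>set \<beta>. fst l \<in> \<int>)"

definition inC :: "(nat \<Rightarrow> complex) \<Rightarrow> bool" where
  "inC f \<longleftrightarrow> (\<exists>P. (\<forall>p\<in>set P. intw (snd p)) \<and> (\<forall>N. f N = (\<Sum>p\<leftarrow>P. fst p * Hw (snd p) N)))"

lemma sl_scale: "(\<Sum>p\<leftarrow>map (\<lambda>p. (a * fst p, snd p)) P. fst p * Hw (snd p) N) = a * (\<Sum>p\<leftarrow>P. fst p * Hw (snd p) N)"
  by (induction P) (auto simp: algebra_simps)

lemma sl_mult_right: "(\<Sum>p\<leftarrow>L. fst p * g p) * (y::complex) = (\<Sum>p\<leftarrow>L. fst p * (g p * y))"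
  by (induction L) (auto simp: algebra_simps)

lemma sl_mult_left: "(y::complex) * (\<Sum>p\<leftarrow>L. fst p * g p) = (\<Sum>p\<leftarrow>L. fst p * (y * g p))"
  by (induction L) (auto simp: algebra_simps)

lemma swap_sl: "(\<Sum>M\<in>S. (\<Sum>p\<leftarrow>L. fst p * g p M :: complex)) = (\<Sum>p\<leftarrow>L. fst p * (\<Sum>M\<in>S. g p M))"
  by (induction L) (auto simp: sum.distrib sum_distrib_left[symmetric])

lemma inC_zero: "inC (\<lambda>N. 0)"
  unfolding inC_def by (rule exI[of _ "[]"]) simp

lemma inC_add: "inC f \<Longrightarrow> inC g \<Longrightarrow> inC (\<lambda>N. f N + g N)"
  unfolding inC_def
proof (elim exE conjE)
  fix P Q assume "\<forall>p\<in>set P. intw (snd p)" "\<forall>N. f N = (\<Sum>p\<leftarrow>P. fst p * Hw (snd p) N)"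
    "\<forall>p\<in>set Q. intw (snd p)" "\<forall>N. g N = (\<Sum>p\<leftarrow>Q. fst p * Hw (snd p) N)"
  then show "\<exists>P. (\<forall>p\<in>set P. intw (snd p)) \<and> (\<forall>N. f N + g N = (\<Sum>p\<leftarrow>P. fst p * Hw (snd p) N))"
    by (intro exI[of _ "P @ Q"]) auto
qed

lemma inC_scale: "inC f \<Longrightarrow> inC (\<lambda>N. a * f N)"
  unfolding inC_def
proof (elim exE conjE)
  fix P assume "\<forall>p\<in>set P. intw (snd p)" "\<forall>N. f N = (\<Sum>p\<leftarrow>P. fst p * Hw (snd p) N)"
  then show "\<exists>P. (\<forall>p\<in>set P. intw (snd p)) \<and> (\<forall>N. a * f N = (\<Sum>p\<leftarrow>P. fst p * Hw (snd p) N))"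
    by (intro exI[of _ "map (\<lambda>p. (a * fst p, snd p)) P"]) (auto simp: sl_scale[unfolded map_map])
qed

lemma inC_Hw: "intw \<beta> \<Longrightarrow> inC (Hw \<beta>)"
  unfolding inC_def by (intro exI[of _ "[(1,\<beta>)]"]) auto

lemma inC_const: "inC (\<lambda>N. a)"
  unfolding inC_def by (intro exI[of _ "[(a,[])]"]) (auto simp: intw_def)

lemma cls_list:
  assumes z: "Cls (\<lambda>N. 0)" and ad: "\<And>f g. Cls f \<Longrightarrow> Cls g \<Longrightarrow> Cls (\<lambda>N. f N + g N)"
    and sc: "\<And>a f. Cls f \<Longrightarrow> Cls (\<lambda>N. a * f N)"
    and each: "\<And>p. p \<in> set L \<Longrightarrow> Cls (F p)"
  shows "Cls (\<lambda>N. \<Sum>p\<leftarrow>L. fst p * F p N)"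
  using each
proof (induction L)
  case Nil then show ?case using z by simp
next
  case (Cons a L)
  have "Cls (\<lambda>N. fst a * F a N + (\<Sum>p\<leftarrow>L. fst p * F p N))"
    by (rule ad[OF sc]) (use Cons in auto)
  then show ?case by simp
qed

lemma cls_sum:
  assumes z: "Cls (\<lambda>N. 0)" and ad: "\<And>f g. Cls f \<Longrightarrow> Cls g \<Longrightarrow> Cls (\<lambda>N. f N + g N)"
    and "finite A" and "\<And>j. j \<in> A \<Longrightarrow> Cls (F j)"
  shows "Cls (\<lambda>N. \<Sum>j\<in>A. F j N)"
  using assms(3,4)
proof (induction A rule: finite_induct)
  case empty then show ?case using z by simp
next
  case (insert x B)
  then show ?case using ad[of "F x"] by simp
qed

lemma lin_lift:
  assumes z: "Cls (\<lambda>N. 0)" and ad: "\<And>f g. Cls f \<Longrightarrow> Cls g \<Longrightarrow> Cls (\<lambda>N. f N + g N)"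
    and sc: "\<And>a f. Cls f \<Longrightarrow> Cls (\<lambda>N. a * f N)"
    and w: "\<And>\<beta>. intw \<beta> \<Longrightarrow> Cls (\<lambda>N. \<Sum>M\<in>S N. K N M * Hw \<beta> (h N M))"
    and G: "inC G"
  shows "Cls (\<lambda>N. \<Sum>M\<in>S N. K N M * G (h N M))"
proof -
  obtain P where P: "\<forall>p\<in>set P. intw (snd p)" "\<forall>N. G N = (\<Sum>p\<leftarrow>P. fst p * Hw (snd p) N)"
    using G unfolding inC_def by blast
  have "Cls (\<lambda>N. \<Sum>p\<leftarrow>P. fst p * (\<Sum>M\<in>S N. K N M * Hw (snd p) (h N M)))"
    by (rule cls_list[OF z ad sc]) (use P w in auto)
  moreover have "(\<Sum>M\<in>S N. K N M * G (h N M)) = (\<Sum>p\<leftarrow>P. fst p * (\<Sum>M\<in>S N. K N M * Hw (snd p) (h N M)))" for N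
  proof -
    have "(\<Sum>M\<in>S N. K N M * G (h N M)) = (\<Sum>M\<in>S N. (\<Sum>p\<leftarrow>P. fst p * (K N M * Hw (snd p) (h N M))))"
      by (intro sum.cong refl) (simp add: P(2) sl_mult_left)
    also have "\<dots> = (\<Sum>p\<leftarrow>P. fst p * (\<Sum>M\<in>S N. K N M * Hw (snd p) (h N M)))"
      by (rule swap_sl)
    finally show ?thesis .
  qed
  ultimately show ?thesis by simp
qed

lemma inC_nest:
  assumes "inC G" "r \<in> \<int>"
  shows "inC (\<lambda>N. \<Sum>M=1..N. s ^ M / of_nat M powr r * G (M-1))"
proof -
  have "inC (\<lambda>N. \<Sum>M\<in>{1..N}. (\<lambda>N M. s ^ M / of_nat M powr r) N M * G ((\<lambda>N M. M - 1) N M))"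
  proof (rule lin_lift[OF inC_zero inC_add inC_scale _ assms(1)])
    fix \<beta> assume "intw \<beta>"
    then have "inC (Hw ((r,s)#\<beta>))" using assms(2) by (intro inC_Hw) (auto simp: intw_def)
    moreover have "(\<lambda>N. \<Sum>M\<in>{1..N}. s ^ M / of_nat M powr r * Hw \<beta> (M - 1)) = Hw ((r,s)#\<beta>)"
      by (rule ext) (simp only: Hw_Cons)
    ultimately show "inC (\<lambda>N. \<Sum>M\<in>{1..N}. s ^ M / of_nat M powr r * Hw \<beta> (M - 1))"
      by simp
  qed
  then show ?thesis by simp
qed




lemma tele:
  fixes f g :: "nat \<Rightarrow> complex"
  shows "f N * g N = f 0 * g 0 + (\<Sum>M=1..N. (f M - f (M-1)) * g (M-1) + f (M-1) * (g M - g (M-1)) + (f M - f (M-1)) * (g M - g (M-1)))"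
proof (induction N)
  case 0 then show ?case by simp
next
  case (Suc N)
  have "f (Suc N) * g (Suc N) = f N * g N + ((f (Suc N) - f N) * g N + f N * (g (Suc N) - g N) + (f (Suc N) - f N) * (g (Suc N) - g N))"
    by (simp add: algebra_simps)
  then show ?case using Suc by (simp add: sum.cl_ivl_Suc)
qed

lemma intw_Cons: "intw ((r,s)#\<beta>) \<longleftrightarrow> r \<in> \<int> \<and> intw \<beta>"
  by (auto simp: intw_def)

lemma inC_Hw_mult_aux:
  "\<forall>a b. length a + length b = n \<longrightarrow> intw a \<longrightarrow> intw b \<longrightarrow> inC (\<lambda>N. Hw a N * Hw b N)"
proof (induction n rule: less_induct)
  case (less n)
  show ?case
  proof (intro allI impI)
    fix a b :: word
    assume len: "length a + length b = n" and ia: "intw a" and ib: "intw b"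
    show "inC (\<lambda>N. Hw a N * Hw b N)"
    proof (cases a)
      case Nil then show ?thesis using inC_Hw[OF ib] by simp
    next
      case (Cons x a')
      obtain r s where x: "x = (r,s)" by fastforce
      show ?thesis
      proof (cases b)
        case Nil then show ?thesis using inC_Hw[OF ia] by simp
      next
        case (Cons y b')
        obtain r' t where y: "y = (r',t)" by fastforce
        note A = \<open>a = x # a'\<close>[unfolded x] and B = \<open>b = y # b'\<close>[unfolded y]
        have r: "r \<in> \<int>" "intw a'" using ia A by (auto simp: intw_Cons)
        have r': "r' \<in> \<int>" "intw b'" using ib B by (auto simp: intw_Cons)
        have IH1: "inC (\<lambda>N. Hw a' N * Hw b N)" using less.IH[of "length a' + length b"] len A r ib by auto
        have IH2: "inC (\<lambda>N. Hw a N * Hw b' N)" using less.IH[of "length a + length b'"] len B r' ia by auto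
        have IH3: "inC (\<lambda>N. Hw a' N * Hw b' N)" using less.IH[of "length a' + length b'"] len A B r r' by auto
        have n1: "inC (\<lambda>N. \<Sum>M=1..N. s ^ M / of_nat M powr r * (Hw a' (M-1) * Hw b (M-1)))"
          by (rule inC_nest[OF IH1 r(1)])
        have n2: "inC (\<lambda>N. \<Sum>M=1..N. t ^ M / of_nat M powr r' * (Hw a (M-1) * Hw b' (M-1)))"
          by (rule inC_nest[OF IH2 r'(1)])
        have n3: "inC (\<lambda>N. \<Sum>M=1..N. (s*t) ^ M / of_nat M powr (r+r') * (Hw a' (M-1) * Hw b' (M-1)))"
          by (rule inC_nest[OF IH3]) (use r r' in auto)
        have eq: "Hw a N * Hw b N = Hw a 0 * Hw b 0 + ((\<Sum>M=1..N. s ^ M / of_nat M powr r * (Hw a' (M-1) * Hw b (M-1)))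
           + (\<Sum>M=1..N. t ^ M / of_nat M powr r' * (Hw a (M-1) * Hw b' (M-1)))
           + (\<Sum>M=1..N. (s*t) ^ M / of_nat M powr (r+r') * (Hw a' (M-1) * Hw b' (M-1))))" for N
        proof -
          have "Hw a N * Hw b N = Hw a 0 * Hw b 0 + (\<Sum>M=1..N. s ^ M / of_nat M powr r * (Hw a' (M-1) * Hw b (M-1))
            + t ^ M / of_nat M powr r' * (Hw a (M-1) * Hw b' (M-1))
            + (s*t) ^ M / of_nat M powr (r+r') * (Hw a' (M-1) * Hw b' (M-1)))"
            unfolding tele[of "Hw a" N "Hw b"]
          proof (rule arg_cong2[where f="(+)"], rule refl, rule sum.cong[OF refl])
            fix M assume "M \<in> {1..N}"
            then have M: "M \<ge> 1" by auto
            have da: "Hw a M - Hw a (M-1) = s ^ M / of_nat M powr r * Hw a' (M-1)"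
              using Hw_Cons_step[OF M, of r s a'] A by simp
            have db: "Hw b M - Hw b (M-1) = t ^ M / of_nat M powr r' * Hw b' (M-1)"
              using Hw_Cons_step[OF M, of r' t b'] B by simp
            have pw: "of_nat M powr (r+r') = (of_nat M powr r) * (of_nat M powr r' :: complex)"
              by (rule powr_add)
            show "(Hw a M - Hw a (M-1)) * Hw b (M-1) + Hw a (M-1) * (Hw b M - Hw b (M-1)) + (Hw a M - Hw a (M-1)) * (Hw b M - Hw b (M-1))
               = s ^ M / of_nat M powr r * (Hw a' (M-1) * Hw b (M-1))
            + t ^ M / of_nat M powr r' * (Hw a (M-1) * Hw b' (M-1))
            + (s*t) ^ M / of_nat M powr (r+r') * (Hw a' (M-1) * Hw b' (M-1))"
            proof -
              have q: "(s*t) ^ M / (of_nat M powr r * of_nat M powr r') = (s ^ M / of_nat M powr r) * (t ^ M / of_nat M powr r')"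
                by (simp add: power_mult_distrib)
              show ?thesis unfolding da db pw q by (simp add: algebra_simps)
            qed
          qed
          then show ?thesis by (simp add: sum.distrib)
        qed
        have "inC (\<lambda>N. Hw a 0 * Hw b 0 + ((\<Sum>M=1..N. s ^ M / of_nat M powr r * (Hw a' (M-1) * Hw b (M-1)))
           + (\<Sum>M=1..N. t ^ M / of_nat M powr r' * (Hw a (M-1) * Hw b' (M-1)))
           + (\<Sum>M=1..N. (s*t) ^ M / of_nat M powr (r+r') * (Hw a' (M-1) * Hw b' (M-1)))))"
          by (rule inC_add[OF inC_const inC_add[OF inC_add[OF n1 n2] n3]])
        moreover have "(\<lambda>N. Hw a N * Hw b N) = (\<lambda>N. Hw a 0 * Hw b 0 + ((\<Sum>M=1..N. s ^ M / of_nat M powr r * (Hw a' (M-1) * Hw b (M-1)))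
           + (\<Sum>M=1..N. t ^ M / of_nat M powr r' * (Hw a (M-1) * Hw b' (M-1)))
           + (\<Sum>M=1..N. (s*t) ^ M / of_nat M powr (r+r') * (Hw a' (M-1) * Hw b' (M-1)))))"
          by (rule ext) (rule eq)
        ultimately show ?thesis by simp
      qed
    qed
  qed
qed

lemma inC_Hw_mult: "intw a \<Longrightarrow> intw b \<Longrightarrow> inC (\<lambda>N. Hw a N * Hw b N)"
  using inC_Hw_mult_aux by blast

lemma inC_mult:
  assumes f: "inC f" and g: "inC g"
  shows "inC (\<lambda>N. f N * g N)"
proof -
  obtain P where P: "\<forall>p\<in>set P. intw (snd p)" "\<forall>N. f N = (\<Sum>p\<leftarrow>P. fst p * Hw (snd p) N)"
    using f unfolding inC_def by blast
  obtain Q where Q: "\<forall>p\<in>set Q. intw (snd p)" "\<forall>N. g N = (\<Sum>p\<leftarrow>Q. fst p * Hw (snd p) N)"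
    using g unfolding inC_def by blast
  have hg: "inC (\<lambda>N. Hw \<beta> N * g N)" if "intw \<beta>" for \<beta>
  proof -
    have "inC (\<lambda>N. \<Sum>q\<leftarrow>Q. fst q * (Hw \<beta> N * Hw (snd q) N))"
      by (rule cls_list[OF inC_zero inC_add inC_scale]) (use Q that inC_Hw_mult in auto)
    then show ?thesis by (simp add: Q(2) sl_mult_left)
  qed
  have "inC (\<lambda>N. \<Sum>p\<leftarrow>P. fst p * (Hw (snd p) N * g N))"
    by (rule cls_list[OF inC_zero inC_add inC_scale]) (use P hg in auto)
  then show ?thesis by (simp add: P(2) sl_mult_right)
qed

lemma inC_pow: "inC f \<Longrightarrow> inC (\<lambda>N. f N ^ e)"
proof (induction e)
  case 0 then show ?case using inC_const[of 1] by simp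
next
  case (Suc e)
  then show ?case using inC_mult[of f "\<lambda>N. f N ^ e"] by simp
qed

lemma inC_prod: "finite A \<Longrightarrow> (\<And>j. j \<in> A \<Longrightarrow> inC (f j)) \<Longrightarrow> inC (\<lambda>N. \<Prod>j\<in>A. f j N)"
proof (induction A rule: finite_induct)
  case empty then show ?case using inC_const by simp
next
  case (insert x B)
  then show ?case using inC_mult[of "f x"] by simp
qed



lemma inC_powi:
  assumes "inC G"
  shows "inC (\<lambda>N. \<Sum>M=1..N. t ^ M * of_nat M powi a * G (M-1))"
proof -
  have "inC (\<lambda>N. \<Sum>M=1..N. t ^ M / of_nat M powr of_int (-a) * G (M-1))"
    by (rule inC_nest[OF assms]) simp
  moreover have "(\<Sum>M=1..N. t ^ M / of_nat M powr of_int (-a) * G (M-1)) = (\<Sum>M=1..N. t ^ M * of_nat M powi a * G (M-1))" for N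
  proof (rule sum.cong[OF refl])
    fix M assume "M \<in> {1..N}"
    then have "(of_nat M :: complex) \<noteq> 0" by auto
    then have "(of_nat M :: complex) powr of_int (-a) = inverse (of_nat M powi a)"
      using complex_powr_of_int[of "of_nat M" "-a"] power_int_minus[of "of_nat M :: complex" a] by simp
    then show "t ^ M / of_nat M powr of_int (-a) * G (M-1) = t ^ M * of_nat M powi a * G (M-1)"
      by (simp add: divide_inverse)
  qed
  ultimately show ?thesis by simp
qed

definition omg :: "nat \<Rightarrow> complex" where "omg c = exp (2 * of_real pi * \<i> / of_nat c)"

lemma root_filter:
  assumes "c > 0"
  shows "(\<Sum>j<c. (omg c ^ j) ^ x) = (if c dvd x then of_nat c else 0)"
proof -
  have wx: "omg c ^ x = exp (2 * of_real pi * \<i> * of_nat x / of_nat c)"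
    unfolding omg_def by (subst exp_of_nat_mult[symmetric]) (simp add: field_simps)
  have eq1: "omg c ^ x = 1 \<longleftrightarrow> c dvd x"
    using complex_root_unity_eq_1[of c x] wx assms by simp
  have wc: "omg c ^ c = 1"
    using complex_root_unity[of c 1] assms by (simp add: omg_def)
  have sw: "(omg c ^ j) ^ x = (omg c ^ x) ^ j" for j
    by (metis power_mult mult.commute)
  show ?thesis
  proof (cases "c dvd x")
    case True
    then show ?thesis using eq1 sw by simp
  next
    case False
    then have ne: "omg c ^ x \<noteq> 1" using eq1 by simp
    have "(\<Sum>j<c. (omg c ^ x) ^ j) = ((omg c ^ x) ^ c - 1) / (omg c ^ x - 1)"
      by (rule geometric_sum[OF ne])
    also have "(omg c ^ x) ^ c = 1"
      by (metis power_mult mult.commute wc power_one)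
    finally show ?thesis using False sw by simp
  qed
qed

definition ind :: "nat \<Rightarrow> nat \<Rightarrow> nat \<Rightarrow> complex" where
  "ind c d M = (if c dvd (M + d) then 1 else 0)"

lemma inC_filter:
  assumes c: "c > 0" and G: "inC G"
  shows "inC (\<lambda>N. \<Sum>M=1..N. ind c d M * t ^ M * of_nat M powi a * G (M-1))"
proof -
  have each: "inC (\<lambda>N. 1 / of_nat c * (omg c ^ j) ^ d * (\<Sum>M=1..N. (omg c ^ j * t) ^ M * of_nat M powi a * G (M-1)))" for j
    by (rule inC_scale[OF inC_powi[OF G]])
  have "inC (\<lambda>N. \<Sum>j<c. 1 / of_nat c * (omg c ^ j) ^ d * (\<Sum>M=1..N. (omg c ^ j * t) ^ M * of_nat M powi a * G (M-1)))"
    by (rule cls_sum[OF inC_zero inC_add]) (use each in auto)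
  moreover have "(\<Sum>j<c. 1 / of_nat c * (omg c ^ j) ^ d * (\<Sum>M=1..N. (omg c ^ j * t) ^ M * of_nat M powi a * G (M-1)))
      = (\<Sum>M=1..N. ind c d M * t ^ M * of_nat M powi a * G (M-1))" for N
  proof -
    have "(\<Sum>j<c. 1 / of_nat c * (omg c ^ j) ^ d * (\<Sum>M=1..N. (omg c ^ j * t) ^ M * of_nat M powi a * G (M-1)))
       = (\<Sum>j<c. \<Sum>M=1..N. 1 / of_nat c * (omg c ^ j) ^ d * ((omg c ^ j * t) ^ M * of_nat M powi a * G (M-1)))"
      by (simp add: sum_distrib_left)
    also have "\<dots> = (\<Sum>M=1..N. \<Sum>j<c. 1 / of_nat c * (omg c ^ j) ^ d * ((omg c ^ j * t) ^ M * of_nat M powi a * G (M-1)))"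
      by (rule sum.swap)
    also have "\<dots> = (\<Sum>M=1..N. ind c d M * t ^ M * of_nat M powi a * G (M-1))"
    proof (rule sum.cong[OF refl])
      fix M
      have "(\<Sum>j<c. 1 / of_nat c * (omg c ^ j) ^ d * ((omg c ^ j * t) ^ M * of_nat M powi a * G (M-1)))
          = 1 / of_nat c * (\<Sum>j<c. (omg c ^ j) ^ (M + d)) * (t ^ M * of_nat M powi a * G (M-1))"
        by (simp add: sum_distrib_left sum_distrib_right power_add power_mult_distrib mult_ac)
      also have "\<dots> = ind c d M * t ^ M * of_nat M powi a * G (M-1)"
        using c by (simp add: root_filter ind_def)
      finally show "(\<Sum>j<c. 1 / of_nat c * (omg c ^ j) ^ d * ((omg c ^ j * t) ^ M * of_nat M powi a * G (M-1)))
          = ind c d M * t ^ M * of_nat M powi a * G (M-1)" .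
    qed
    finally show ?thesis .
  qed
  ultimately show ?thesis by simp
qed


lemma inC_filter':
  assumes c: "c > 0" and G: "inC G"
  shows "inC (\<lambda>N. \<Sum>M=1..N. ind c d M * t ^ M * of_nat M powi a * G M)"
proof -
  have "inC (\<lambda>N. \<Sum>M\<in>{1..N}. (\<lambda>N M. ind c d M * t ^ M * of_nat M powi a) N M * G ((\<lambda>N M. M) N M))"
  proof (rule lin_lift[OF inC_zero inC_add inC_scale _ G])
    fix \<beta> :: word assume ib: "intw \<beta>"
    show "inC (\<lambda>N. \<Sum>M\<in>{1..N}. ind c d M * t ^ M * of_nat M powi a * Hw \<beta> M)"
    proof (cases \<beta>)
      case Nil
      then show ?thesis using inC_filter[OF c inC_const[of 1], of d t a] by simp
    next
      case (Cons x \<beta>')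
      obtain r s where x: "x = (r,s)" by fastforce
      have r: "r \<in> \<int>" "intw \<beta>'" using ib Cons x by (auto simp: intw_def)
      then obtain r' where r': "r = of_int r'" by (auto elim: Ints_cases)
      have i1: "inC (\<lambda>N. \<Sum>M=1..N. ind c d M * t ^ M * of_nat M powi a * Hw \<beta> (M-1))"
        by (rule inC_filter[OF c inC_Hw[OF ib]])
      have i2: "inC (\<lambda>N. \<Sum>M=1..N. ind c d M * (t * s) ^ M * of_nat M powi (a - r') * Hw \<beta>' (M-1))"
        by (rule inC_filter[OF c inC_Hw[OF r(2)]])
      have eq: "(\<Sum>M\<in>{1..N}. ind c d M * t ^ M * of_nat M powi a * Hw \<beta> M) =
        (\<Sum>M=1..N. ind c d M * t ^ M * of_nat M powi a * Hw \<beta> (M-1)) +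
        (\<Sum>M=1..N. ind c d M * (t * s) ^ M * of_nat M powi (a - r') * Hw \<beta>' (M-1))" for N
      proof -
        have "(\<Sum>M\<in>{1..N}. ind c d M * t ^ M * of_nat M powi a * Hw \<beta> M) =
          (\<Sum>M=1..N. ind c d M * t ^ M * of_nat M powi a * Hw \<beta> (M-1) +
           ind c d M * (t * s) ^ M * of_nat M powi (a - r') * Hw \<beta>' (M-1))"
        proof (rule sum.cong[OF refl])
          fix M assume "M \<in> {1..N}"
          then have M: "M \<ge> 1" and M0: "(of_nat M :: complex) \<noteq> 0" by auto
          have st: "Hw \<beta> M = Hw \<beta> (M-1) + s ^ M / of_nat M powr r * Hw \<beta>' (M-1)"
            using Hw_Cons_step[OF M, of r s \<beta>'] Cons x by simp
          have pr: "(of_nat M :: complex) powr r = of_nat M powi r'"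
            using complex_powr_of_int[of "of_nat M" r'] M0 r' by simp
          have pd: "(of_nat M :: complex) powi (a - r') = of_nat M powi a / of_nat M powi r'"
            using power_int_diff[of "of_nat M :: complex" a r'] M0 by simp
          show "ind c d M * t ^ M * of_nat M powi a * Hw \<beta> M =
           ind c d M * t ^ M * of_nat M powi a * Hw \<beta> (M-1) +
           ind c d M * (t * s) ^ M * of_nat M powi (a - r') * Hw \<beta>' (M-1)"
            unfolding st pr pd by (simp add: power_mult_distrib algebra_simps)
        qed
        then show ?thesis by (simp add: sum.distrib)
      qed
      show ?thesis unfolding eq by (rule inC_add[OF i1 i2])
    qed
  qed
  then show ?thesis by simp
qed

definition inC2 :: "(nat \<Rightarrow> complex) \<Rightarrow> bool" where
  "inC2 f \<longleftrightarrow> (\<exists>f1 f2. inC f1 \<and> inC f2 \<and> (\<forall>N. f N = f1 N + f2 (Suc N)))"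

lemma inC2_zero: "inC2 (\<lambda>N. 0)"
  unfolding inC2_def using inC_zero by force

lemma inC2_add: "inC2 f \<Longrightarrow> inC2 g \<Longrightarrow> inC2 (\<lambda>N. f N + g N)"
  unfolding inC2_def
proof (elim exE conjE)
  fix f1 f2 g1 g2 assume "inC f1" "inC f2" "\<forall>N. f N = f1 N + f2 (Suc N)" "inC g1" "inC g2" "\<forall>N. g N = g1 N + g2 (Suc N)"
  then show "\<exists>f1 f2. inC f1 \<and> inC f2 \<and> (\<forall>N. f N + g N = f1 N + f2 (Suc N))"
    by (intro exI[of _ "\<lambda>N. f1 N + g1 N"] exI[of _ "\<lambda>N. f2 N + g2 N"]) (auto intro!: inC_add)
qed

lemma inC2_scale: "inC2 f \<Longrightarrow> inC2 (\<lambda>N. a * f N)"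
  unfolding inC2_def
proof (elim exE conjE)
  fix f1 f2 assume "inC f1" "inC f2" "\<forall>N. f N = f1 N + f2 (Suc N)"
  then show "\<exists>f1 f2. inC f1 \<and> inC f2 \<and> (\<forall>N. a * f N = f1 N + f2 (Suc N))"
    by (intro exI[of _ "\<lambda>N. a * f1 N"] exI[of _ "\<lambda>N. a * f2 N"]) (auto intro!: inC_scale simp: algebra_simps)
qed

lemma inC_inC2: "inC f \<Longrightarrow> inC2 f"
  unfolding inC2_def by (intro exI[of _ f] exI[of _ "\<lambda>N. 0"]) (auto intro: inC_zero)

lemma inC_inC2_shift: "inC f \<Longrightarrow> inC2 (\<lambda>N. f (Suc N))"
  unfolding inC2_def by (intro exI[of _ "\<lambda>N. 0"] exI[of _ f]) (auto intro: inC_zero)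

lemma shift_sum: "(\<Sum>M=1..N. g (Suc M)) = (\<Sum>M=1..Suc N. g M) - (g 1 :: complex)"
  by (induction N) (auto simp: sum.cl_ivl_Suc)

lemma ind_shift: "c > 0 \<Longrightarrow> ind c (d + c - 1) (Suc M) = ind c d M"
proof -
  assume c: "c > 0"
  have "Suc M + (d + c - 1) = (M + d) + c" using c by simp
  then show ?thesis unfolding ind_def by (simp only: dvd_add_triv_right_iff)
qed

lemma inC2_shift:
  assumes c: "c > 0" and G: "inC G"
  shows "inC2 (\<lambda>N. \<Sum>M=1..N. ind c d M * u ^ M * of_nat (M+1) powi j * G M)"
proof (cases "u = 0")
  case True
  have "(\<lambda>N. \<Sum>M=1..N. ind c d M * u ^ M * of_nat (M+1) powi j * G M) = (\<lambda>N. 0)"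
    by (rule ext, rule sum.neutral) (use True in auto)
  then show ?thesis using inC2_zero by simp
next
  case False
  define g where "g M = 1/u * (ind c (d + c - 1) M * u ^ M * of_nat M powi j * G (M-1))" for M
  define F where "F N = (\<Sum>M=1..N. ind c (d + c - 1) M * u ^ M * of_nat M powi j * G (M-1))" for N
  have iF: "inC F" unfolding F_def by (rule inC_filter[OF c G])
  have iF2: "inC (\<lambda>N. 1/u * F N + (- (1/u) * F 1))"
    by (rule inC_add[OF inC_scale[OF iF] inC_const])
  have gs: "ind c d M * u ^ M * of_nat (M+1) powi j * G M = g (Suc M)" for M
  proof -
    have "u ^ Suc M / u = u ^ M" using False by simp
    then show ?thesis using False unfolding g_def ind_shift[OF c] by (simp add: field_simps)
  qed
  have sg: "sum g {1..N} = 1/u * F N" for N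
    unfolding g_def F_def by (simp add: sum_distrib_left)
  have "(\<Sum>M=1..N. ind c d M * u ^ M * of_nat (M+1) powi j * G M) = 1/u * F (Suc N) + (- (1/u) * F 1)" for N
  proof -
    have "(\<Sum>M=1..N. ind c d M * u ^ M * of_nat (M+1) powi j * G M) = (\<Sum>M=1..N. g (Suc M))"
      by (simp only: gs)
    also have "\<dots> = sum g {1..Suc N} - g 1" by (rule shift_sum)
    also have "g 1 = 1/u * F 1" using sg[of 1] by simp
    finally show ?thesis using sg[of "Suc N"] by simp
  qed
  then have "(\<lambda>N. \<Sum>M=1..N. ind c d M * u ^ M * of_nat (M+1) powi j * G M) = (\<lambda>N. 1/u * F (Suc N) + (- (1/u) * F 1))"
    by (rule ext)
  then show ?thesis using inC_inC2_shift[OF iF2] by simp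
qed


definition pf :: "(complex \<Rightarrow> complex) \<Rightarrow> bool" where
  "pf f \<longleftrightarrow> (\<exists>A B :: (complex \<times> int) list. \<forall>x. x \<noteq> 0 \<longrightarrow> x + 1 \<noteq> 0 \<longrightarrow>
      f x = (\<Sum>p\<leftarrow>A. fst p * x powi snd p) + (\<Sum>p\<leftarrow>B. fst p * (x+1) powi snd p))"

lemma sl_scale_gen: "(\<Sum>p\<leftarrow>map (\<lambda>p. (a * fst p, snd p)) P. fst p * (h (snd p) :: complex)) = a * (\<Sum>p\<leftarrow>P. fst p * h (snd p))"
  by (induction P) (auto simp: algebra_simps)

lemma pf_add: "pf f \<Longrightarrow> pf g \<Longrightarrow> pf (\<lambda>x. f x + g x)"
  unfolding pf_def
proof (elim exE)
  fix A B A' B' assume h1: "\<forall>x. x \<noteq> 0 \<longrightarrow> x + 1 \<noteq> 0 \<longrightarrow> f x = (\<Sum>p\<leftarrow>A. fst p * x powi snd p) + (\<Sum>p\<leftarrow>B. fst p * (x+1) powi snd p)"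
    and h2: "\<forall>x. x \<noteq> 0 \<longrightarrow> x + 1 \<noteq> 0 \<longrightarrow> g x = (\<Sum>p\<leftarrow>A'. fst p * x powi snd p) + (\<Sum>p\<leftarrow>B'. fst p * (x+1) powi snd p)"
  show "\<exists>A B :: (complex \<times> int) list. \<forall>x. x \<noteq> 0 \<longrightarrow> x + 1 \<noteq> 0 \<longrightarrow>
      f x + g x = (\<Sum>p\<leftarrow>A. fst p * x powi snd p) + (\<Sum>p\<leftarrow>B. fst p * (x+1) powi snd p)"
    by (rule exI[of _ "A @ A'"], rule exI[of _ "B @ B'"]) (use h1 h2 in auto)
qed

lemma pf_scale: "pf f \<Longrightarrow> pf (\<lambda>x. a * f x)"
  unfolding pf_def
proof (elim exE)
  fix A B assume h1: "\<forall>x. x \<noteq> 0 \<longrightarrow> x + 1 \<noteq> 0 \<longrightarrow> f x = (\<Sum>p\<leftarrow>A. fst p * x powi snd p) + (\<Sum>p\<leftarrow>B. fst p * (x+1) powi snd p)"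
  show "\<exists>A B :: (complex \<times> int) list. \<forall>x. x \<noteq> 0 \<longrightarrow> x + 1 \<noteq> 0 \<longrightarrow>
      a * f x = (\<Sum>p\<leftarrow>A. fst p * x powi snd p) + (\<Sum>p\<leftarrow>B. fst p * (x+1) powi snd p)"
  proof (rule exI[of _ "map (\<lambda>p. (a * fst p, snd p)) A"], rule exI[of _ "map (\<lambda>p. (a * fst p, snd p)) B"], intro allI impI)
    fix x :: complex assume "x \<noteq> 0" "x + 1 \<noteq> 0"
    then show "a * f x = (\<Sum>p\<leftarrow>map (\<lambda>p. (a * fst p, snd p)) A. fst p * x powi snd p) + (\<Sum>p\<leftarrow>map (\<lambda>p. (a * fst p, snd p)) B. fst p * (x+1) powi snd p)"
      using h1 sl_scale_gen[where a=a and P=A and h="\<lambda>i. x powi i"] sl_scale_gen[where a=a and P=B and h="\<lambda>i. (x+1) powi i"]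
      by (simp add: algebra_simps)
  qed
qed

lemma pf_x: "pf (\<lambda>x. x powi i)"
  unfolding pf_def by (rule exI[of _ "[(1,i)]"], rule exI[of _ "[]"]) simp

lemma pf_y: "pf (\<lambda>x. (x+1) powi i)"
  unfolding pf_def by (rule exI[of _ "[]"], rule exI[of _ "[(1,i)]"]) simp

lemma pf_cong: "pf g \<Longrightarrow> (\<And>x. x \<noteq> 0 \<Longrightarrow> x + 1 \<noteq> 0 \<Longrightarrow> f x = g x) \<Longrightarrow> pf f"
  unfolding pf_def by metis

lemma pf_bpos: "pf (\<lambda>x. x powi a * (x+1) powi int n)"
proof (induction n arbitrary: a)
  case 0 then show ?case using pf_x[of a] by simp
next
  case (Suc n)
  show ?case
  proof (rule pf_cong[OF pf_add[OF Suc[of "a+1"] Suc[of a]]])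
    fix x :: complex assume x: "x \<noteq> 0" "x + 1 \<noteq> 0"
    have "(x+1) powi int (Suc n) = (x+1) powi int n * (x+1)"
      by (simp only: power_int_of_nat power_Suc2)
    moreover have "x powi (a+1) = x powi a * x" using power_int_add_1[of x a] x by simp
    ultimately show "x powi a * (x+1) powi int (Suc n) = x powi (a+1) * (x+1) powi int n + x powi a * (x+1) powi int n"
      by (simp add: algebra_simps)
  qed
qed

lemma pf_apos: "pf (\<lambda>x. x powi int n * (x+1) powi b)"
proof (induction n arbitrary: b)
  case 0 then show ?case using pf_y[of b] by simp
next
  case (Suc n)
  show ?case
  proof (rule pf_cong[OF pf_add[OF Suc[of "b+1"] pf_scale[OF Suc[of b], of "-1"]]])
    fix x :: complex assume x: "x \<noteq> 0" "x + 1 \<noteq> 0"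
    have "x powi int (Suc n) = x powi int n * x"
      by (simp only: power_int_of_nat power_Suc2)
    moreover have "(x+1) powi (b+1) = (x+1) powi b * (x+1)" using power_int_add_1[of "x+1" b] x by simp
    ultimately show "x powi int (Suc n) * (x+1) powi b = x powi int n * (x+1) powi (b+1) + -1 * (x powi int n * (x+1) powi b)"
      by (simp add: algebra_simps)
  qed
qed

lemma pf_all_aux: "\<forall>a b. nat (-a) + nat (-b) = k \<longrightarrow> pf (\<lambda>x. x powi a * (x+1) powi b)"
proof (induction k rule: less_induct)
  case (less k)
  show ?case
  proof (intro allI impI)
    fix a b :: int assume k: "nat (-a) + nat (-b) = k"
    show "pf (\<lambda>x. x powi a * (x+1) powi b)"
    proof (cases "a \<ge> 0")
      case True
      then show ?thesis using pf_apos[of "nat a" b] by simp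
    next
      case a: False
      show ?thesis
      proof (cases "b \<ge> 0")
        case True
        then show ?thesis using pf_bpos[of a "nat b"] by simp
      next
        case b: False
        have I1: "pf (\<lambda>x. x powi a * (x+1) powi (b+1))"
          using less.IH[of "nat (-a) + nat (-(b+1))"] k a b by auto
        have I2: "pf (\<lambda>x. x powi (a+1) * (x+1) powi b)"
          using less.IH[of "nat (-(a+1)) + nat (-b)"] k a b by auto
        show ?thesis
        proof (rule pf_cong[OF pf_add[OF I1 pf_scale[OF I2, of "-1"]]])
          fix x :: complex assume x: "x \<noteq> 0" "x + 1 \<noteq> 0"
          have "x powi (a+1) = x powi a * x" using power_int_add_1[of x a] x by simp
          moreover have "(x+1) powi (b+1) = (x+1) powi b * (x+1)" using power_int_add_1[of "x+1" b] x by simp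
          ultimately show "x powi a * (x+1) powi b = x powi a * (x+1) powi (b+1) + -1 * (x powi (a+1) * (x+1) powi b)"
            by (simp add: algebra_simps)
        qed
      qed
    qed
  qed
qed

lemma pf_all: "pf (\<lambda>x. x powi a * (x+1) powi b)"
  using pf_all_aux by blast


lemma core:
  assumes c: "c > 0" and G: "inC G"
  shows "inC2 (\<lambda>N. \<Sum>M=1..N. ind c d M * t ^ M * of_nat M powi q * G (M+1))"
proof -
  have "inC2 (\<lambda>N. \<Sum>M\<in>{1..N}. (\<lambda>N M. ind c d M * t ^ M * of_nat M powi q) N M * G ((\<lambda>N M. M+1) N M))"
  proof (rule lin_lift[OF inC2_zero inC2_add inC2_scale _ G])
    fix \<beta> :: word assume ib: "intw \<beta>"
    show "inC2 (\<lambda>N. \<Sum>M\<in>{1..N}. ind c d M * t ^ M * of_nat M powi q * Hw \<beta> (M+1))"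
    proof (cases \<beta>)
      case Nil
      then show ?thesis using inC_inC2[OF inC_filter'[OF c inC_const[of 1], of d t q]] by simp
    next
      case (Cons x \<beta>')
      obtain r s where x: "x = (r,s)" by fastforce
      have r: "r \<in> \<int>" "intw \<beta>'" using ib Cons x by (auto simp: intw_def)
      then obtain r' where r': "r = of_int r'" by (auto elim: Ints_cases)
      obtain A B :: "(complex \<times> int) list" where AB0: "\<forall>x. x \<noteq> 0 \<longrightarrow> x + 1 \<noteq> 0 \<longrightarrow> x powi q * (x+1) powi (-r') =
          (\<Sum>p\<leftarrow>A. fst p * x powi snd p) + (\<Sum>p\<leftarrow>B. fst p * (x+1) powi snd p)"
        using pf_all[of q "-r'"] unfolding pf_def by blast
      have AB: "x powi q * (x+1) powi (-r') =
          (\<Sum>p\<leftarrow>A. fst p * x powi snd p) + (\<Sum>p\<leftarrow>B. fst p * (x+1) powi snd p)" if "x \<noteq> 0" "x + 1 \<noteq> 0" for x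
        using AB0 that by blast
      define Y where "Y M = ind c d M * t ^ M * s ^ (M+1) * Hw \<beta>' M" for M
      have i1: "inC2 (\<lambda>N. \<Sum>M=1..N. ind c d M * t ^ M * of_nat M powi q * Hw \<beta> M)"
        by (rule inC_inC2[OF inC_filter'[OF c inC_Hw[OF ib]]])
      have iA: "inC2 (\<lambda>N. \<Sum>M=1..N. Y M * of_nat M powi i)" for i
      proof -
        have "(\<Sum>M=1..N. Y M * of_nat M powi i) = s * (\<Sum>M=1..N. ind c d M * (t * s) ^ M * of_nat M powi i * Hw \<beta>' M)" for N
          unfolding Y_def sum_distrib_left by (intro sum.cong refl) (simp add: power_mult_distrib mult_ac)
        then show ?thesis using inC_inC2[OF inC_scale[OF inC_filter'[OF c inC_Hw[OF r(2)]], of s d "t * s" i]] by simp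
      qed
      have iB: "inC2 (\<lambda>N. \<Sum>M=1..N. Y M * of_nat (M+1) powi i)" for i
      proof -
        have "(\<Sum>M=1..N. Y M * of_nat (M+1) powi i) = s * (\<Sum>M=1..N. ind c d M * (t * s) ^ M * of_nat (M+1) powi i * Hw \<beta>' M)" for N
          unfolding Y_def sum_distrib_left by (intro sum.cong refl) (simp add: power_mult_distrib mult_ac)
        then show ?thesis using inC2_scale[OF inC2_shift[OF c inC_Hw[OF r(2)]], of s d "t * s" i] by simp
      qed
      have sA: "inC2 (\<lambda>N. \<Sum>p\<leftarrow>A. fst p * (\<Sum>M=1..N. Y M * of_nat M powi snd p))"
        by (rule cls_list[OF inC2_zero inC2_add inC2_scale]) (use iA in auto)
      have sB: "inC2 (\<lambda>N. \<Sum>p\<leftarrow>B. fst p * (\<Sum>M=1..N. Y M * of_nat (M+1) powi snd p))"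
        by (rule cls_list[OF inC2_zero inC2_add inC2_scale]) (use iB in auto)
      have eq: "(\<Sum>M\<in>{1..N}. ind c d M * t ^ M * of_nat M powi q * Hw \<beta> (M+1)) =
         (\<Sum>M=1..N. ind c d M * t ^ M * of_nat M powi q * Hw \<beta> M) +
         (\<Sum>p\<leftarrow>A. fst p * (\<Sum>M=1..N. Y M * of_nat M powi snd p)) +
         (\<Sum>p\<leftarrow>B. fst p * (\<Sum>M=1..N. Y M * of_nat (M+1) powi snd p))" for N
      proof -
        have "(\<Sum>M\<in>{1..N}. ind c d M * t ^ M * of_nat M powi q * Hw \<beta> (M+1)) =
          (\<Sum>M=1..N. ind c d M * t ^ M * of_nat M powi q * Hw \<beta> M +
             (\<Sum>p\<leftarrow>A. fst p * (Y M * of_nat M powi snd p)) +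
             (\<Sum>p\<leftarrow>B. fst p * (Y M * of_nat (M+1) powi snd p)))"
        proof (rule sum.cong[OF refl])
          fix M assume "M \<in> {1..N}"
          then have M0: "(of_nat M :: complex) \<noteq> 0" by auto
          have "(of_nat M :: complex) + 1 = of_nat (Suc M)" by simp
          then have M1: "(of_nat M :: complex) + 1 \<noteq> 0" by (simp only: of_nat_eq_0_iff)
          have M1': "(of_nat (M+1) :: complex) \<noteq> 0" using M1 by (simp add: add.commute)
          have st: "Hw \<beta> (M+1) = Hw \<beta> M + s ^ (M+1) / of_nat (M+1) powr r * Hw \<beta>' M"
            using Hw_Cons_step[of "M+1" r s \<beta>'] Cons x by simp
          have pr: "(of_nat (M+1) :: complex) powr r = inverse ((of_nat M + 1) powi (-r'))"
            using complex_powr_of_int[of "of_nat (M+1)" r'] M1' r' power_int_minus[of "of_nat M + 1 :: complex" r']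
            by (simp add: add.commute)
          have e1: "ind c d M * t ^ M * of_nat M powi q * (s ^ (M+1) / of_nat (M+1) powr r * Hw \<beta>' M)
             = Y M * (of_nat M powi q * (of_nat M + 1) powi (-r'))"
            unfolding pr Y_def by (simp add: divide_inverse mult_ac)
          also have "\<dots> = Y M * (\<Sum>p\<leftarrow>A. fst p * of_nat M powi snd p) + Y M * (\<Sum>p\<leftarrow>B. fst p * (of_nat M + 1) powi snd p)"
            unfolding AB[OF M0 M1] by (simp add: algebra_simps)
          also have "\<dots> = (\<Sum>p\<leftarrow>A. fst p * (Y M * of_nat M powi snd p)) + (\<Sum>p\<leftarrow>B. fst p * (Y M * of_nat (M+1) powi snd p))"
            by (simp add: sl_mult_left add.commute)
          finally have e2: "ind c d M * t ^ M * of_nat M powi q * (s ^ (M+1) / of_nat (M+1) powr r * Hw \<beta>' M)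
             = (\<Sum>p\<leftarrow>A. fst p * (Y M * of_nat M powi snd p)) + (\<Sum>p\<leftarrow>B. fst p * (Y M * of_nat (M+1) powi snd p))" .
          show "ind c d M * t ^ M * of_nat M powi q * Hw \<beta> (M+1) =
             ind c d M * t ^ M * of_nat M powi q * Hw \<beta> M +
             (\<Sum>p\<leftarrow>A. fst p * (Y M * of_nat M powi snd p)) +
             (\<Sum>p\<leftarrow>B. fst p * (Y M * of_nat (M+1) powi snd p))"
            unfolding st distrib_left e2 by (simp add: add.assoc)
        qed
        also have "\<dots> = (\<Sum>M=1..N. ind c d M * t ^ M * of_nat M powi q * Hw \<beta> M) +
         (\<Sum>M=1..N. (\<Sum>p\<leftarrow>A. fst p * (Y M * of_nat M powi snd p))) +
         (\<Sum>M=1..N. (\<Sum>p\<leftarrow>B. fst p * (Y M * of_nat (M+1) powi snd p)))"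
          by (simp add: sum.distrib)
        also have "\<dots> = (\<Sum>M=1..N. ind c d M * t ^ M * of_nat M powi q * Hw \<beta> M) +
         (\<Sum>p\<leftarrow>A. fst p * (\<Sum>M=1..N. Y M * of_nat M powi snd p)) +
         (\<Sum>p\<leftarrow>B. fst p * (\<Sum>M=1..N. Y M * of_nat (M+1) powi snd p))"
          by (simp only: swap_sl)
        finally show ?thesis .
      qed
      have "inC2 (\<lambda>N. (\<Sum>M=1..N. ind c d M * t ^ M * of_nat M powi q * Hw \<beta> M) +
         (\<Sum>p\<leftarrow>A. fst p * (\<Sum>M=1..N. Y M * of_nat M powi snd p)) +
         (\<Sum>p\<leftarrow>B. fst p * (\<Sum>M=1..N. Y M * of_nat (M+1) powi snd p)))"
        by (rule inC2_add[OF inC2_add[OF i1 sA] sB])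
      moreover have "(\<lambda>N. \<Sum>M\<in>{1..N}. ind c d M * t ^ M * of_nat M powi q * Hw \<beta> (M+1)) = (\<lambda>N. (\<Sum>M=1..N. ind c d M * t ^ M * of_nat M powi q * Hw \<beta> M) +
         (\<Sum>p\<leftarrow>A. fst p * (\<Sum>M=1..N. Y M * of_nat M powi snd p)) +
         (\<Sum>p\<leftarrow>B. fst p * (\<Sum>M=1..N. Y M * of_nat (M+1) powi snd p)))"
        by (rule ext) (rule eq)
      ultimately show ?thesis by simp
    qed
  qed
  then show ?thesis by simp
qed


lemma reidx1:
  assumes c: "c > 0"
  shows "(\<Sum>n=1..k. g (c*n)) = (\<Sum>M=1..c*k. ind c 0 M * g M)"
proof -
  have "(\<Sum>M=1..c*k. ind c 0 M * g M) = (\<Sum>M\<in>{1..c*k}. if c dvd M then g M else 0)"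
    by (intro sum.cong refl) (simp add: ind_def)
  also have "\<dots> = sum g {M\<in>{1..c*k}. c dvd M}"
    by (rule sum.inter_filter[symmetric]) simp
  also have "{M\<in>{1..c*k}. c dvd M} = (\<lambda>n. c*n) ` {1..k}"
  proof (rule set_eqI, rule iffI)
    fix M assume "M \<in> {M\<in>{1..c*k}. c dvd M}"
    then obtain n where M: "M = c*n" "1 \<le> c*n" "c*n \<le> c*k" by (auto elim: dvdE)
    then have "1 \<le> n" "n \<le> k" using c by (auto simp: Suc_le_eq)
    then show "M \<in> (\<lambda>n. c*n) ` {1..k}" using M by auto
  next
    fix M assume "M \<in> (\<lambda>n. c*n) ` {1..k}"
    then show "M \<in> {M\<in>{1..c*k}. c dvd M}" using c by (auto simp: Suc_le_eq)
  qed
  also have "sum g ((\<lambda>n. c*n) ` {1..k}) = (\<Sum>n=1..k. g (c*n))"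
    by (subst sum.reindex) (use c in \<open>auto simp: inj_on_def\<close>)
  finally show ?thesis by simp
qed

lemma reidx2:
  assumes c: "c > 0"
  shows "(\<Sum>n=nu c..k. g (c*n - 1)) = (\<Sum>M=1..c*k-1. ind c 1 M * g M)"
proof -
  have "(\<Sum>M=1..c*k-1. ind c 1 M * g M) = (\<Sum>M\<in>{1..c*k-1}. if c dvd (M+1) then g M else 0)"
    by (intro sum.cong refl) (simp add: ind_def)
  also have "\<dots> = sum g {M\<in>{1..c*k-1}. c dvd (M+1)}"
    by (rule sum.inter_filter[symmetric]) simp
  also have "{M\<in>{1..c*k-1}. c dvd (M+1)} = (\<lambda>n. c*n - 1) ` {nu c..k}"
  proof (rule set_eqI, rule iffI)
    fix M assume "M \<in> {M\<in>{1..c*k-1}. c dvd (M+1)}"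
    then obtain n where M: "M + 1 = c*n" "1 \<le> M" "M \<le> c*k - 1" by (auto elim: dvdE)
    then have "n \<le> k" using c
      by (metis Suc_eq_plus1 le_diff_conv2 Suc_le_eq le_trans less_or_eq_imp_le mult_le_cancel1 nat_le_linear
          not_less_eq_eq diff_le_self one_le_mult_iff)
    moreover have "nu c \<le> n"
    proof (cases "c \<ge> 2")
      case True then show ?thesis using M by (cases n) (auto simp: nu_def)
    next
      case False then have "c = 1" using c by auto
      then show ?thesis using M by (auto simp: nu_def)
    qed
    moreover have "M = c*n - 1" using M by simp
    ultimately show "M \<in> (\<lambda>n. c*n - 1) ` {nu c..k}" by auto
  next
    fix M assume "M \<in> (\<lambda>n. c*n - 1) ` {nu c..k}"
    then obtain n where n: "M = c*n - 1" "nu c \<le> n" "n \<le> k" by auto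
    have "2 \<le> c*n"
    proof (cases "c \<ge> 2")
      case True
      then have "1 \<le> n" using n by (simp add: nu_def)
      then show ?thesis using True by (metis mult_le_mono nat_mult_1_right)
    next
      case False then have "c = 1" using c by auto
      then show ?thesis using n by (simp add: nu_def)
    qed
    moreover have "c*n \<le> c*k" using n by simp
    then have "c*n - 1 \<le> c*k - 1" by (rule diff_le_mono)
    moreover have "M + 1 = c*n" using n \<open>2 \<le> c*n\<close> by simp
    ultimately show "M \<in> {M\<in>{1..c*k-1}. c dvd (M+1)}" using n by auto
  qed
  also have "sum g ((\<lambda>n. c*n - 1) ` {nu c..k}) = (\<Sum>n=nu c..k. g (c*n - 1))"
  proof (subst sum.reindex)
    show "inj_on (\<lambda>n. c*n - 1) {nu c..k}"
    proof (rule inj_onI)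
      fix x y assume "x \<in> {nu c..k}" "y \<in> {nu c..k}" "c*x - 1 = c*y - 1"
      moreover have "nu c \<ge> 1" by (simp add: nu_def)
      ultimately have "c*x = c*y" using c
        by (metis One_nat_def Suc_pred atLeastAtMost_iff le_trans mult_pos_pos not_le not_one_le_zero zero_less_iff_neq_zero)
      then show "x = y" using c by simp
    qed
  qed simp
  finally show ?thesis by simp
qed


lemma fin:
  assumes G: "inC2 G" and F: "\<forall>k\<ge>1. F k = a * G (N1 k)" and N: "\<forall>k\<ge>1. N2 k = Suc (N1 k)"
  shows "in_HH_sum F N1 N2"
proof -
  obtain f1 f2 where f: "inC f1" "inC f2" "\<forall>N. G N = f1 N + f2 (Suc N)"
    using G unfolding inC2_def by blast
  obtain P where P: "\<forall>N. f1 N = (\<Sum>p\<leftarrow>P. fst p * Hw (snd p) N)"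
    using f(1) unfolding inC_def by blast
  obtain Q where Q: "\<forall>N. f2 N = (\<Sum>p\<leftarrow>Q. fst p * Hw (snd p) N)"
    using f(2) unfolding inC_def by blast
  have cp: "(\<Sum>(x,\<beta>)\<leftarrow>L. x * Hw \<beta> n) = (\<Sum>p\<leftarrow>L. fst p * Hw (snd p) n)" for L :: "(complex \<times> word) list" and n
    by (induction L) auto
  show ?thesis unfolding in_HH_sum_def
  proof (intro exI allI impI)
    fix k :: nat assume k: "k \<ge> 1"
    show "F k = (\<Sum>(x,\<beta>)\<leftarrow>map (\<lambda>p. (a * fst p, snd p)) P. x * Hw \<beta> (N1 k)) + (\<Sum>(x,\<beta>)\<leftarrow>map (\<lambda>p. (a * fst p, snd p)) Q. x * Hw \<beta> (N2 k))"
      unfolding cp sl_scale using F N k f(3) P Q by (simp add: algebra_simps)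
  qed
qed

theorem theorem3p5:
  fixes c m :: nat and \<alpha> :: "nat \<Rightarrow> word" and e :: "nat \<Rightarrow> nat"
    and q :: int and z :: complex
  assumes "c > 0"
    and "\<forall>j\<in>{1..m}. \<forall>l\<in>set (\<alpha> j). fst l \<in> \<int>"
  shows "in_HH_sum
           (\<lambda>k. \<Sum>n=1..k. z ^ n * (of_nat (c*n)) powi q * (\<Prod>j=1..m. Hw (\<alpha> j) (c*n+1) ^ e j))
           (\<lambda>k. c*k) (\<lambda>k. c*k+1)
       \<and> in_HH_sum
           (\<lambda>k. \<Sum>n=nu c..k. z ^ n * (of_nat (c*n) - 1) powi q * (\<Prod>j=1..m. Hw (\<alpha> j) (c*n) ^ e j))
           (\<lambda>k. c*k - 1) (\<lambda>k. c*k)"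
proof -
  have c: "c > 0" by fact
  obtain w where w: "z = w ^ c" using exists_complex_root[of c z] c by auto
  define Pi where "Pi N = (\<Prod>j=1..m. Hw (\<alpha> j) N ^ e j)" for N
  have iPi: "inC Pi"
    unfolding Pi_def
    by (rule inC_prod) (use assms(2) in \<open>auto intro!: inC_pow inC_Hw simp: intw_def\<close>)
  have C1: "inC2 (\<lambda>N. \<Sum>M=1..N. ind c 0 M * w ^ M * of_nat M powi q * Pi (M+1))"
    by (rule core[OF c iPi])
  have C2: "inC2 (\<lambda>N. \<Sum>M=1..N. ind c 1 M * w ^ M * of_nat M powi q * Pi (M+1))"
    by (rule core[OF c iPi])
  have P1: "in_HH_sum
           (\<lambda>k. \<Sum>n=1..k. z ^ n * (of_nat (c*n)) powi q * (\<Prod>j=1..m. Hw (\<alpha> j) (c*n+1) ^ e j))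
           (\<lambda>k. c*k) (\<lambda>k. c*k+1)"
  proof (rule fin[OF C1, where a=1])
    show "\<forall>k\<ge>1. (\<Sum>n=1..k. z ^ n * (of_nat (c*n)) powi q * (\<Prod>j=1..m. Hw (\<alpha> j) (c*n+1) ^ e j)) =
      1 * (\<Sum>M=1..c*k. ind c 0 M * w ^ M * of_nat M powi q * Pi (M+1))"
    proof (intro allI impI)
      fix k :: nat
      have "(\<Sum>n=1..k. z ^ n * (of_nat (c*n)) powi q * (\<Prod>j=1..m. Hw (\<alpha> j) (c*n+1) ^ e j))
         = (\<Sum>n=1..k. (\<lambda>M. w ^ M * of_nat M powi q * Pi (M+1)) (c*n))"
        by (intro sum.cong refl) (simp add: w Pi_def power_mult)
      also have "\<dots> = (\<Sum>M=1..c*k. ind c 0 M * (w ^ M * of_nat M powi q * Pi (M+1)))"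
        by (rule reidx1[OF c])
      finally show "(\<Sum>n=1..k. z ^ n * (of_nat (c*n)) powi q * (\<Prod>j=1..m. Hw (\<alpha> j) (c*n+1) ^ e j)) =
        1 * (\<Sum>M=1..c*k. ind c 0 M * w ^ M * of_nat M powi q * Pi (M+1))"
        by (simp add: mult.assoc)
    qed
  qed simp
  have P2: "in_HH_sum
           (\<lambda>k. \<Sum>n=nu c..k. z ^ n * (of_nat (c*n) - 1) powi q * (\<Prod>j=1..m. Hw (\<alpha> j) (c*n) ^ e j))
           (\<lambda>k. c*k - 1) (\<lambda>k. c*k)"
  proof (rule fin[OF C2, where a=w])
    show "\<forall>k\<ge>1. (\<Sum>n=nu c..k. z ^ n * (of_nat (c*n) - 1) powi q * (\<Prod>j=1..m. Hw (\<alpha> j) (c*n) ^ e j)) =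
      w * (\<Sum>M=1..c*k-1. ind c 1 M * w ^ M * of_nat M powi q * Pi (M+1))"
    proof (intro allI impI)
      fix k :: nat
      have "(\<Sum>n=nu c..k. z ^ n * (of_nat (c*n) - 1) powi q * (\<Prod>j=1..m. Hw (\<alpha> j) (c*n) ^ e j))
         = (\<Sum>n=nu c..k. (\<lambda>M. w ^ (M+1) * of_nat M powi q * Pi (M+1)) (c*n - 1))"
      proof (intro sum.cong refl)
        fix n assume "n \<in> {nu c..k}"
        then have "n \<ge> 1" by (auto simp: nu_def split: if_splits)
        then have cn: "c*n \<ge> 1" using c by (simp add: Suc_le_eq)
        then have e1: "c*n - 1 + 1 = c*n" by simp
        have e2: "(of_nat (c*n) - 1 :: complex) = of_nat (c*n - 1)" using cn by (simp add: of_nat_diff)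
        show "z ^ n * (of_nat (c*n) - 1) powi q * (\<Prod>j=1..m. Hw (\<alpha> j) (c*n) ^ e j) =
          (\<lambda>M. w ^ (M+1) * of_nat M powi q * Pi (M+1)) (c*n - 1)"
          unfolding e1 e2 by (simp add: w Pi_def power_mult)
      qed
      also have "\<dots> = (\<Sum>M=1..c*k-1. ind c 1 M * (w ^ (M+1) * of_nat M powi q * Pi (M+1)))"
        by (rule reidx2[OF c])
      also have "\<dots> = w * (\<Sum>M=1..c*k-1. ind c 1 M * w ^ M * of_nat M powi q * Pi (M+1))"
        by (simp add: sum_distrib_left mult_ac)
      finally show "(\<Sum>n=nu c..k. z ^ n * (of_nat (c*n) - 1) powi q * (\<Prod>j=1..m. Hw (\<alpha> j) (c*n) ^ e j)) =
        w * (\<Sum>M=1..c*k-1. ind c 1 M * w ^ M * of_nat M powi q * Pi (M+1))" .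
    qed
    show "\<forall>k\<ge>1. c*k = Suc (c*k - 1)"
      using c by (auto simp: Suc_le_eq)
  qed
  show ?thesis using P1 P2 by blast
qed


end
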